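(* Let $F\subset\mathbb{R}$ be closed and define $f\colon[0,\infty)\to[-\infty,0]$ by $f(\gamma)=-\inf_{a\in F}\ell(\gamma;a)$. If $F\subset(-\infty,0)$, then $f\equiv-\infty$. If $F\cap[0,\infty)\neq\emptyset$, then $f$ is real-valued and continuous on $(0,\infty)$, and $\lim_{\gamma\downarrow0}f(\gamma)=f(0)$, where $f(0)=0$ if $0\in F$ and $f(0)=-\infty$ if $0\notin F$. In any case, $f^{-1}([a,b])$ is closed for all $a,b\in(-\infty,0]$ with $a\le b$.
   Context: For $\gamma\ge0$: $\ell(\gamma;a)=\infty$ for $a<0$, $\ell(\gamma;0)=\gamma$, and $\ell(\gamma;a)=\gamma-a+a\log(a/\gamma)$ for $a>0$ (interpreted as $\infty$ when $\gamma=0$). *)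

theory Defs
  imports "HOL-Analysis.Analysis"
begin

definition ell :: "real \<Rightarrow> real \<Rightarrow> ereal" where
  "ell \<gamma> a = (if a < 0 then \<infinity>
               else if a = 0 then ereal \<gamma>
               else if \<gamma> = 0 then \<infinity>
               else ereal (\<gamma> - a + a * ln (a / \<gamma>)))"

definition fF :: "real set \<Rightarrow> real \<Rightarrow> ereal" where
  "fF F \<gamma> = - (INF a\<in>F. ell \<gamma> a)"

end

theory Submission
  imports Defs
begin

definition pp :: "real \<Rightarrow> real \<Rightarrow> real" where "pp u a = a * ln a - a - a * u"

lemma ln_ineq:
  fixes a b :: real assumes "a \<ge> 0" "b > 0" shows "a - b \<le> a * (ln a - ln b)"
proof (cases "a = 0")
  case True thus ?thesis using assms by simp
next
  case False
  hence a: "a > 0" using assms by simp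
  have "ln (b/a) \<le> b/a - 1" using ln_le_minus_one a assms by simp
  hence "ln b - ln a \<le> b/a - 1" using ln_div a assms by simp
  hence "a*(ln b - ln a) \<le> a*(b/a - 1)" using a by (simp add: mult_left_mono)
  also have "\<dots> = b - a" using a by (simp add: field_simps)
  finally show ?thesis by (simp add: algebra_simps)
qed

lemma ell_pos: assumes "\<gamma> > 0" "a \<ge> 0" shows "ell \<gamma> a = ereal (\<gamma> + pp (ln \<gamma>) a)"
  using assms by (auto simp: ell_def pp_def ln_div algebra_simps)

lemma pp_lower: "a \<ge> 0 \<Longrightarrow> - exp u \<le> pp u a"
  using ln_ineq[of a "exp u"] by (simp add: pp_def algebra_simps)

theorem proposition6:
  fixes F :: "real set"
  assumes "closed F"
  shows "(F \<subseteq> {..<0} \<longrightarrow> (\<forall>\<gamma>\<ge>0. fF F \<gamma> = -\<infinity>))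
    \<and> (F \<inter> {0..} \<noteq> {} \<longrightarrow>
         (\<forall>\<gamma>>0. \<bar>fF F \<gamma>\<bar> \<noteq> \<infinity>)
       \<and> continuous_on {0<..} (fF F)
       \<and> (fF F \<longlongrightarrow> fF F 0) (at_right 0)
       \<and> fF F 0 = (if 0 \<in> F then 0 else -\<infinity>))
    \<and> (\<forall>a b :: real. a \<le> b \<and> b \<le> 0 \<longrightarrow>
         closed {\<gamma> \<in> {0..}. fF F \<gamma> \<in> {ereal a..ereal b}})"
proof -
  define G where "G = F \<inter> {0..}"
  define q where "q u = (INF a\<in>G. pp u a)" for u
  have empty: "fF F \<gamma> = -\<infinity>" if "G = {}" for \<gamma>
  proof -
    have "\<forall>a\<in>F. ell \<gamma> a = \<infinity>" using that by (auto simp: G_def ell_def)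
    hence "(INF a\<in>F. ell \<gamma> a) = \<infinity>" by (simp add: INF_eqI)
    thus ?thesis by (simp add: fF_def)
  qed
  have part1: "F \<subseteq> {..<0} \<longrightarrow> (\<forall>\<gamma>\<ge>0. fF F \<gamma> = -\<infinity>)"
  proof (intro impI allI)
    assume "F \<subseteq> {..<0}"
    hence "G = {}" by (auto simp: G_def)
    thus "fF F \<gamma> = -\<infinity>" for \<gamma> using empty by blast
  qed
  show ?thesis
  proof (cases "G = {}")
    case True
    have "{\<gamma> \<in> {0..}. fF F \<gamma> \<in> {ereal a..ereal b}} = {}" for a b
      using empty[OF True] by auto
    hence "\<forall>a b :: real. a \<le> b \<and> b \<le> 0 \<longrightarrow>
         closed {\<gamma> \<in> {0..}. fF F \<gamma> \<in> {ereal a..ereal b}}" by (simp only: closed_empty simp_thms)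
    thus ?thesis using part1 True by (simp only: G_def simp_thms)
  next
    case Gne: False
    have bdd: "bdd_below (pp u ` G)" for u
      using pp_lower by (auto simp: G_def bdd_below_def) 
    have qle: "q u \<le> pp u a" if "a \<in> G" for u a
      unfolding q_def using bdd that by (rule cINF_lower)
    have qge: "- exp u \<le> q u" for u
      unfolding q_def using Gne pp_lower by (auto simp: G_def intro!: cINF_greatest)
    have conv: "convex_on UNIV (\<lambda>u. - q u)"
    proof (rule convex_onI)
      fix t x y :: real assume t: "0 < t" "t < 1"
      have "(1 - t) * q x + t * q y \<le> q ((1 - t) *\<^sub>R x + t *\<^sub>R y)"
        unfolding q_def[of "(1 - t) *\<^sub>R x + t *\<^sub>R y"]
      proof (rule cINF_greatest[OF Gne])
        fix a assume a: "a \<in> G"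
        have "(1 - t) * q x \<le> (1 - t) * pp x a" using qle[OF a] t by (simp add: mult_left_mono)
        moreover have "t * q y \<le> t * pp y a" using qle[OF a] t by (simp add: mult_left_mono)
        moreover have "pp ((1 - t) *\<^sub>R x + t *\<^sub>R y) a = (1 - t) * pp x a + t * pp y a"
          by (simp add: pp_def algebra_simps)
        ultimately show "(1 - t) * q x + t * q y \<le> pp ((1 - t) *\<^sub>R x + t *\<^sub>R y) a" by linarith
      qed
      thus "- q ((1 - t) *\<^sub>R x + t *\<^sub>R y) \<le> (1 - t) * - q x + t * - q y" by linarith
    qed simp
    have "continuous_on UNIV (\<lambda>u. - q u)" by (rule convex_on_continuous[OF open_UNIV conv])
    from continuous_on_minus[OF this] have contq: "continuous_on UNIV q" by simp
    have fpos: "fF F \<gamma> = ereal (-(\<gamma> + q (ln \<gamma>)))" if g: "\<gamma> > 0" for \<gamma>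
    proof -
      have "(INF a\<in>F. ell \<gamma> a) = ereal (\<gamma> + q (ln \<gamma>))"
      proof (rule INF_eqI)
        fix a assume a: "a \<in> F"
        show "ereal (\<gamma> + q (ln \<gamma>)) \<le> ell \<gamma> a"
        proof (cases "a < 0")
          case True thus ?thesis by (simp add: ell_def)
        next
          case False
          hence "a \<in> G" using a by (simp add: G_def)
          thus ?thesis using ell_pos[OF g] False qle by simp
        qed
      next
        fix y assume y: "\<And>a. a \<in> F \<Longrightarrow> y \<le> ell \<gamma> a"
        obtain a0 where a0: "a0 \<in> G" using Gne by blast
        have ya: "y \<le> ereal (\<gamma> + pp (ln \<gamma>) a)" if "a \<in> G" for a
          using y[of a] that ell_pos[OF g, of a] by (simp add: G_def)
        show "y \<le> ereal (\<gamma> + q (ln \<gamma>))"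
        proof (cases y)
          case (real r)
          have "r - \<gamma> \<le> q (ln \<gamma>)" unfolding q_def
            using ya real by (intro cINF_greatest[OF Gne]) (simp add: algebra_simps)
          thus ?thesis using real by simp
        next
          case PInf thus ?thesis using ya[OF a0] by simp
        qed simp
      qed
      thus ?thesis by (simp add: fF_def)
    qed
    have cont: "continuous_on {0<..} (fF F)"
    proof -
      have "continuous_on {0<..} (\<lambda>\<gamma>. ereal (-(\<gamma> + q (ln \<gamma>))))"
        by (intro continuous_intros continuous_on_compose2[OF contq]) auto
      thus ?thesis by (rule continuous_on_cong[THEN iffD1, rotated 2]) (auto simp: fpos)
    qed
    have f0: "fF F 0 = (if 0 \<in> F then 0 else -\<infinity>)"
    proof (cases "0 \<in> F")
      case True
      have "(INF a\<in>F. ell 0 a) = 0"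
      proof (rule INF_eqI)
        fix y assume "\<And>a. a \<in> F \<Longrightarrow> y \<le> ell 0 a"
        from this[OF True] show "y \<le> 0" by (simp add: ell_def zero_ereal_def)
      qed (auto simp: ell_def)
      thus ?thesis using True by (simp add: fF_def)
    next
      case False
      have "(INF a\<in>F. ell 0 a) = \<infinity>"
        by (rule INF_eqI) (use False in \<open>auto simp: ell_def\<close>)
      thus ?thesis using False by (simp add: fF_def)
    qed
    have evpos: "eventually (\<lambda>\<gamma>. fF F \<gamma> = ereal (-(\<gamma> + q (ln \<gamma>)))) (at_right 0)"
      using eventually_at_right_less[of 0] by eventually_elim (simp add: fpos)
    have lim: "(fF F \<longlongrightarrow> fF F 0) (at_right 0)"
    proof (cases "0 \<in> F")
      case True
      have "((\<lambda>\<gamma>. -(\<gamma> + q (ln \<gamma>))) \<longlongrightarrow> 0) (at_right 0)"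
      proof (rule tendsto_sandwich)
        show "eventually (\<lambda>\<gamma>. - \<gamma> \<le> -(\<gamma> + q (ln \<gamma>))) (at_right (0::real))"
          using eventually_at_right_less[of 0] proof eventually_elim
          case (elim \<gamma>) thus ?case using qle[of 0 "ln \<gamma>"] True by (simp add: G_def pp_def)
        qed
        show "eventually (\<lambda>\<gamma>. -(\<gamma> + q (ln \<gamma>)) \<le> 0) (at_right (0::real))"
          using eventually_at_right_less[of 0] proof eventually_elim
          case (elim \<gamma>) thus ?case using qge[of "ln \<gamma>"] by simp
        qed
        show "((\<lambda>\<gamma>. - \<gamma>) \<longlongrightarrow> (0::real)) (at_right 0)"
          using tendsto_minus[OF tendsto_ident_at[of 0 "{0<..}"]] by simp
      qed simp
      hence "((\<lambda>\<gamma>. ereal (-(\<gamma> + q (ln \<gamma>)))) \<longlongrightarrow> ereal 0) (at_right 0)"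
        by (simp add: lim_ereal)
      hence "(fF F \<longlongrightarrow> 0) (at_right 0)"
        using tendsto_cong[OF evpos] by (simp add: zero_ereal_def)
      thus ?thesis using f0 True by simp
    next
      case False
      have "open (- F)" using assms by auto
      then obtain \<delta> where d: "\<delta> > 0" "ball 0 \<delta> \<subseteq> - F"
        using False by (meson ComplI open_contains_ball)
      have aG: "a \<ge> \<delta>" if "a \<in> G" for a
      proof (rule ccontr)
        assume "\<not> a \<ge> \<delta>"
        hence "a \<in> ball 0 \<delta>" using that by (auto simp: G_def dist_real_def)
        moreover have "a \<in> F" using that by (simp add: G_def)
        ultimately show False using d by blast
      qed
      have bound: "-(\<gamma> + q (ln \<gamma>)) \<le> \<delta> - \<delta> * ln \<delta> + \<delta> * ln \<gamma>" if g: "0 < \<gamma>" "\<gamma> < \<delta>" for \<gamma>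
      proof -
        have lg: "ln \<gamma> \<le> ln \<delta>" using g by simp
        have "\<gamma> - \<delta> + \<delta> * (ln \<delta> - ln \<gamma>) - \<gamma> \<le> q (ln \<gamma>)" unfolding q_def
        proof (rule cINF_greatest[OF Gne])
          fix a assume a: "a \<in> G"
          have ad: "a \<ge> \<delta>" using aG[OF a] .
          have "a - \<delta> \<le> a * (ln a - ln \<delta>)" using ln_ineq[of a \<delta>] ad d by simp
          moreover have "\<delta> * (ln \<delta> - ln \<gamma>) \<le> a * (ln \<delta> - ln \<gamma>)"
            using ad lg by (simp add: mult_right_mono)
          ultimately show "\<gamma> - \<delta> + \<delta> * (ln \<delta> - ln \<gamma>) - \<gamma> \<le> pp (ln \<gamma>) a"
            by (simp add: pp_def algebra_simps)
        qed
        thus ?thesis using g by (simp add: algebra_simps)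
      qed
      have "(fF F \<longlongrightarrow> -\<infinity>) (at_right 0)"
        unfolding tendsto_MInfty
      proof
        fix r :: real
        define K where "K = (r - \<delta> + \<delta> * ln \<delta>) / \<delta>"
        show "eventually (\<lambda>\<gamma>. fF F \<gamma> < ereal r) (at_right 0)"
          unfolding eventually_at_right_field
        proof (intro exI[of _ "min \<delta> (exp K)"] conjI allI impI)
          show "0 < min \<delta> (exp K)" using d by simp
          fix \<gamma> :: real assume g: "0 < \<gamma>" "\<gamma> < min \<delta> (exp K)"
          have "ln \<gamma> < ln (exp K)" using g by (subst ln_less_cancel_iff) auto
          hence "ln \<gamma> < K" by simp
          hence "\<delta> * ln \<gamma> < \<delta> * K" using d by simp
          also have "\<delta> * K = r - \<delta> + \<delta> * ln \<delta>" using d by (simp add: K_def)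
          finally have "-(\<gamma> + q (ln \<gamma>)) < r" using bound[of \<gamma>] g by simp
          thus "fF F \<gamma> < ereal r" using fpos g by simp
        qed
      qed
      thus ?thesis using f0 False by simp
    qed
    have contall: "continuous_on {0..} (fF F)"
      unfolding continuous_on_eq_continuous_within
    proof
      fix x :: real assume x: "x \<in> {0..}"
      show "continuous (at x within {0..}) (fF F)"
      proof (cases "x = 0")
        case True
        thus ?thesis using lim by (simp add: continuous_within at_within_Ici_at_right)
      next
        case False
        hence "x \<in> {0<..}" using x by simp
        hence "isCont (fF F) x" using cont continuous_on_eq_continuous_at[OF open_greaterThan] by blast
        thus ?thesis by (rule continuous_at_imp_continuous_within)
      qed
    qed
    have "closed {\<gamma> \<in> {0..}. fF F \<gamma> \<in> {ereal a..ereal b}}" for a b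
    proof -
      have "closed ({0..} \<inter> fF F -` {ereal a..ereal b})"
        by (rule continuous_closed_preimage[OF contall closed_atLeast closed_atLeastAtMost])
      moreover have "{\<gamma> \<in> {0..}. fF F \<gamma> \<in> {ereal a..ereal b}} = {0..} \<inter> fF F -` {ereal a..ereal b}"
        by auto
      ultimately show ?thesis by simp
    qed
    moreover have "\<forall>\<gamma>>0. \<bar>fF F \<gamma>\<bar> \<noteq> \<infinity>" using fpos by simp
    ultimately show ?thesis using part1 cont lim f0 by blast
  qed
qed

end
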